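(* Let $\Gamma$ be a typing context and $A$ a type, both closed (containing no atomic types). If there is a term $t$ with $\Gamma\vdash t:A$, then either there is a closed term $\emptyset\vdash u:A$, or there is a term $\Gamma\vdash w:0$.
   Context: Types: $A,B ::= X \mid A\to B \mid A_1\times A_2 \mid 1 \mid A_1+A_2 \mid 0$ ($X$ atomic); a closed type contains no atomic type, and a closed context contains only closed types. Terms: $x \mid \lambda x.t \mid t\,u \mid (t_1,t_2) \mid \pi_i t \mid () \mid \sigma_i t \mid \mathtt{match}\ t\ \mathtt{with}\ (\sigma_1 x_1\to u_1 \mid \sigma_2 x_2\to u_2) \mid \mathtt{absurd}(t)$, with the standard simple typing rules of the simply-typed $\lambda$-calculus with functions, products, unit, binary sums and the empty type ($\mathtt{absurd}(t):A$ for any $A$ when $t:0$). *)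

theory Defs
  imports Main
begin

datatype ty = Atom nat | Arr ty ty | Prod ty ty | Unit | Sum ty ty | Empty

text \<open>Terms, with variables as de Bruijn indices (Curry-style, unannotated lambdas).
  Lam t binds index 0 in t; Match t u1 u2 binds index 0 in u1 and in u2.\<close>
datatype tm = Var nat | Lam tm | App tm tm | Pair tm tm | Proj1 tm | Proj2 tm | UnitT
  | Inj1 tm | Inj2 tm | Match tm tm tm | Absurd tm

inductive typing :: "ty list \<Rightarrow> tm \<Rightarrow> ty \<Rightarrow> bool" where
  T_Var: "i < length \<Gamma> \<Longrightarrow> \<Gamma> ! i = A \<Longrightarrow> typing \<Gamma> (Var i) A"
| T_Lam: "typing (A # \<Gamma>) t B \<Longrightarrow> typing \<Gamma> (Lam t) (Arr A B)"
| T_App: "typing \<Gamma> t (Arr A B) \<Longrightarrow> typing \<Gamma> u A \<Longrightarrow> typing \<Gamma> (App t u) B"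
| T_Pair: "typing \<Gamma> t1 A1 \<Longrightarrow> typing \<Gamma> t2 A2 \<Longrightarrow> typing \<Gamma> (Pair t1 t2) (Prod A1 A2)"
| T_Proj1: "typing \<Gamma> t (Prod A1 A2) \<Longrightarrow> typing \<Gamma> (Proj1 t) A1"
| T_Proj2: "typing \<Gamma> t (Prod A1 A2) \<Longrightarrow> typing \<Gamma> (Proj2 t) A2"
| T_Unit: "typing \<Gamma> UnitT Unit"
| T_Inj1: "typing \<Gamma> t A1 \<Longrightarrow> typing \<Gamma> (Inj1 t) (Sum A1 A2)"
| T_Inj2: "typing \<Gamma> t A2 \<Longrightarrow> typing \<Gamma> (Inj2 t) (Sum A1 A2)"
| T_Match: "typing \<Gamma> t (Sum A1 A2) \<Longrightarrow> typing (A1 # \<Gamma>) u1 C \<Longrightarrow> typing (A2 # \<Gamma>) u2 C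
             \<Longrightarrow> typing \<Gamma> (Match t u1 u2) C"
| T_Absurd: "typing \<Gamma> t Empty \<Longrightarrow> typing \<Gamma> (Absurd t) A"

fun closed_ty :: "ty \<Rightarrow> bool" where
  "closed_ty (Atom X) = False"
| "closed_ty (Arr A B) = (closed_ty A \<and> closed_ty B)"
| "closed_ty (Prod A B) = (closed_ty A \<and> closed_ty B)"
| "closed_ty Unit = True"
| "closed_ty (Sum A B) = (closed_ty A \<and> closed_ty B)"
| "closed_ty Empty = True"

definition closed_ctx :: "ty list \<Rightarrow> bool" where
  "closed_ctx \<Gamma> \<longleftrightarrow> (\<forall>A \<in> set \<Gamma>. closed_ty A)"

end

theory Submission
  imports Defs
begin

lemma weaken: "typing \<Gamma> t T \<Longrightarrow> typing (\<Gamma> @ \<Delta>) t T"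
  by (induction rule: typing.induct) (auto intro: typing.intros simp: nth_append)

lemma weaken0: "typing [] t T \<Longrightarrow> typing \<Delta> t T"
  using weaken[of "[]" t T \<Delta>] by simp

lemma decide: "closed_ty A \<Longrightarrow> (\<exists>u. typing [] u A) \<or> (\<exists>f. typing [] f (Arr A Empty))"
proof (induction A)
  case (Atom x) then show ?case by simp
next
  case Unit then show ?case by (auto intro: typing.intros)
next
  case Empty
  have "typing [] (Lam (Var 0)) (Arr Empty Empty)" by (auto intro!: typing.intros)
  then show ?case by blast
next
  case (Arr A B)
  then have IA: "(\<exists>u. typing [] u A) \<or> (\<exists>f. typing [] f (Arr A Empty))"
    and IB: "(\<exists>u. typing [] u B) \<or> (\<exists>f. typing [] f (Arr B Empty))" by auto
  show ?case
  proof (cases "\<exists>u. typing [] u B")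
    case True
    then obtain b where b: "typing [] b B" by blast
    have "typing [A] b B" using weaken0[OF b] .
    then have "typing [] (Lam b) (Arr A B)" by (rule T_Lam)
    then show ?thesis by blast
  next
    case False
    then obtain nB where nB: "typing [] nB (Arr B Empty)" using IB by blast
    show ?thesis
    proof (cases "\<exists>u. typing [] u A")
      case True
      then obtain a where a: "typing [] a A" by blast
      have "typing [Arr A B] (App nB (App (Var 0) a)) Empty"
        by (rule T_App[OF weaken0[OF nB]], rule T_App[OF _ weaken0[OF a]], auto intro: typing.intros)
      then have "typing [] (Lam (App nB (App (Var 0) a))) (Arr (Arr A B) Empty)" by (rule T_Lam)
      then show ?thesis by blast
    next
      case False
      then obtain nA where nA: "typing [] nA (Arr A Empty)" using IA by blast
      have "typing [A] (Absurd (App nA (Var 0))) B"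
        by (rule T_Absurd, rule T_App[OF weaken0[OF nA]], auto intro: typing.intros)
      then have "typing [] (Lam (Absurd (App nA (Var 0)))) (Arr A B)" by (rule T_Lam)
      then show ?thesis by blast
    qed
  qed
next
  case (Prod A B)
  then have IA: "(\<exists>u. typing [] u A) \<or> (\<exists>f. typing [] f (Arr A Empty))"
    and IB: "(\<exists>u. typing [] u B) \<or> (\<exists>f. typing [] f (Arr B Empty))" by auto
  show ?case
  proof (cases "(\<exists>u. typing [] u A) \<and> (\<exists>u. typing [] u B)")
    case True
    then obtain a b where "typing [] a A" "typing [] b B" by blast
    then have "typing [] (Pair a b) (Prod A B)" by (rule T_Pair)
    then show ?thesis by blast
  next
    case False
    then consider (a) nA where "typing [] nA (Arr A Empty)" | (b) nB where "typing [] nB (Arr B Empty)"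
      using IA IB by blast
    then show ?thesis
    proof cases
      case a
      have "typing [Prod A B] (App nA (Proj1 (Var 0))) Empty"
        by (rule T_App[OF weaken0[OF a]], rule T_Proj1, auto intro: typing.intros)
      then have "typing [] (Lam (App nA (Proj1 (Var 0)))) (Arr (Prod A B) Empty)" by (rule T_Lam)
      then show ?thesis by blast
    next
      case b
      have "typing [Prod A B] (App nB (Proj2 (Var 0))) Empty"
        by (rule T_App[OF weaken0[OF b]], rule T_Proj2, auto intro: typing.intros)
      then have "typing [] (Lam (App nB (Proj2 (Var 0)))) (Arr (Prod A B) Empty)" by (rule T_Lam)
      then show ?thesis by blast
    qed
  qed
next
  case (Sum A B)
  then have IA: "(\<exists>u. typing [] u A) \<or> (\<exists>f. typing [] f (Arr A Empty))"
    and IB: "(\<exists>u. typing [] u B) \<or> (\<exists>f. typing [] f (Arr B Empty))" by auto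
  show ?case
  proof (cases "\<exists>u. typing [] u A")
    case True
    then obtain a where "typing [] a A" by blast
    then have "typing [] (Inj1 a) (Sum A B)" by (rule T_Inj1)
    then show ?thesis by blast
  next
    case F1: False
    show ?thesis
    proof (cases "\<exists>u. typing [] u B")
      case True
      then obtain b where "typing [] b B" by blast
      then have "typing [] (Inj2 b) (Sum A B)" by (rule T_Inj2)
      then show ?thesis by blast
    next
      case False
      then obtain nA nB where nA: "typing [] nA (Arr A Empty)" and nB: "typing [] nB (Arr B Empty)"
        using IA IB F1 by blast
      have "typing [Sum A B] (Match (Var 0) (App nA (Var 0)) (App nB (Var 0))) Empty"
        by (rule T_Match, auto intro: typing.intros,
            (rule T_App[OF weaken0[OF nA]], auto intro: typing.intros),
            (rule T_App[OF weaken0[OF nB]], auto intro: typing.intros))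
      then have "typing [] (Lam (Match (Var 0) (App nA (Var 0)) (App nB (Var 0)))) (Arr (Sum A B) Empty)"
        by (rule T_Lam)
      then show ?thesis by blast
    qed
  qed
qed

theorem mainTheorem8:
  assumes "closed_ctx \<Gamma>" and "closed_ty A" and "typing \<Gamma> t A"
  shows "(\<exists>u. typing [] u A) \<or> (\<exists>w. typing \<Gamma> w Empty)"
proof -
  from decide[OF assms(2)] show ?thesis
  proof
    assume "\<exists>f. typing [] f (Arr A Empty)"
    then obtain f where "typing [] f (Arr A Empty)" by blast
    then have "typing \<Gamma> (App f t) Empty" using assms(3) by (auto intro: T_App weaken0)
    then show ?thesis by blast
  qed simp
qed

end
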